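(* Let $v\in\mathbb{R}^J$ and let $\mathscr{P}_2(v)=\inf\{\alpha\in\mathbb{R}\mid v+\alpha\mathbf{1}\in R(Cx+Qy),\ (x,y)\in\mathcal{X}\}$. Then $$\mathscr{P}_2(v)=\sup_{\mu\in\mathbb{M}_1^J,\ \lambda\in\mathbb{L}^M,\ \gamma\in\mathbb{R}^J_+}\Big\{\sum_{i\in\Omega}f_i(\mu_i,\lambda_i,\gamma)-\gamma^{\mathsf T}v-\beta(\mu,\gamma)\ \Big|\ \gamma^{\mathsf T}\mathbf{1}=1,\ \mathbb{E}[\lambda]=0\Big\}$$ $$\qquad=\sup_{m\in\mathbb{M}_f^J,\ \lambda\in\mathbb{L}^M}\Big\{\sum_{i\in\Omega}\tilde f_i(m_i,\lambda_i)-\sum_{i\in\Omega}m_i^{\mathsf T}v-\tilde\beta(m)\ \Big|\ \sum_{i\in\Omega}m_i^{\mathsf T}\mathbf{1}=1,\ \mathbb{E}[\lambda]=0\Big\}.$$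
   Context: Probability space: $\Omega=\{1,\dots,I\}$, $I\ge 2$, with probabilities $p_i>0$, $\sum_{i\in\Omega}p_i=1$. For an integer $J\ge1$, $\mathbb{L}^J$ denotes the set of random vectors $u:\Omega\to\mathbb{R}^J$, identified with tuples $(u_1,\dots,u_I)$, $u_i\in\mathbb{R}^J$; $\mathbb{L}^{J\times N}$ denotes random $J\times N$ matrices with realizations $Q_1,\dots,Q_I$; $\mathbb{L}^N_+$ the random vectors with nonnegative components; $\mathbb{E}[u]=\sum_{i}p_iu_i$. $u\le v$ means $u_i^j\le v_i^j$ for all $i,j$. $\mathbf{1}=(1,\dots,1)^{\mathsf T}\in\mathbb{R}^J$. A multivariate convex risk measure is a map $R:\mathbb{L}^J\to 2^{\mathbb{R}^J}$ such that: (A1) $u\le v$ implies $R(u)\supseteq R(v)$; (A2) $R(u+z)=R(u)+z$ for all $z\in\mathbb{R}^J$; (A3) $R(u)\notin\{\emptyset,\mathbb{R}^J\}$; (A4) $R(\gamma u+(1-\gamma)v)\supseteq\gamma R(u)+(1-\gamma)R(v)$ for $\gamma\in(0,1)$; (A5) the acceptance set $\mathcal{A}=\{u\in\mathbb{L}^J\mid 0\in R(u)\}$ is closed. $\mathbb{M}_1^J$ denotes the set of $J$-tuples $\mu=(\mu^1,\dots,\mu^J)$ of probability measures on $\Omega$, with $\mu_i=(\mu_i^1,\dots,\mu_i^J)^{\mathsf T}$, and $\mathbb{E}^\mu[u]=\sum_{i\in\Omega}\mu_i\cdot u_i$, where $\cdot$ is the componentwise (Hadamard) product. $\mathbb{M}_f^J$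 denotes the set of $J$-tuples $m=(m^1,\dots,m^J)$ of finite (nonnegative) measures on $\Omega$, with $m_i=(m_i^1,\dots,m_i^J)^{\mathsf T}\in\mathbb{R}^J_+$. The minimal penalty function is $\beta(\mu,w)=\sup_{u\in\mathcal{A}}w^{\mathsf T}\mathbb{E}^\mu[u]$ for $\mu\in\mathbb{M}_1^J$, $w\in\mathbb{R}^J_+\setminus\{0\}$; it is known that $\inf_{z\in R(u)}w^{\mathsf T}z=\sup_{\mu\in\mathbb{M}_1^J}(w^{\mathsf T}\mathbb{E}^\mu[u]-\beta(\mu,w))$. Also $\tilde\beta(m)=\sup_{u\in\mathcal{A}}\sum_{i\in\Omega}m_i^{\mathsf T}u_i$ for $m\in\mathbb{M}_f^J$. Problem data: $A\in\mathbb{R}^{K\times M}$, $b\in\mathbb{R}^K$, $C\in\mathbb{R}^{J\times M}$, random $W\in\mathbb{L}^{L\times N}$, $T\in\mathbb{L}^{L\times M}$, $h\in\mathbb{L}^L$, $Q\in\mathbb{L}^{J\times N}$; $\mathcal{X}=\{(x,y)\in\mathbb{R}^M_+\times\mathbb{L}^N_+\mid Ax=b,\ T_ix+W_iy_i=h_i\ \forall i\in\Omega\}$, assumed nonempty and compact; $Cx+Qy$ has realizations $Cx+Q_iy_i$. For each $i$, $\mathcal{F}_i=\{(x_i,y_i)\in\mathbb{R}^M_+\times\mathbb{R}^N_+\mid Ax_i=b,\ T_ix_i+W_iy_i=h_i\}$, assumed nonempty and compact. For $\mu_i\in\mathbb{R}^J_+$, $\lambda_i\in\mathbb{R}^M$,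 $\gamma\in\mathbb{R}^J_+$: $f_i(\mu_i,\lambda_i,\gamma)=\inf_{(x_i,y_i)\in\mathcal{F}_i}\big(\gamma^{\mathsf T}[\mu_i\cdot(Cx_i+Q_iy_i)]+p_i\lambda_i^{\mathsf T}x_i\big)$, and for $m_i\in\mathbb{R}^J_+$: $\tilde f_i(m_i,\lambda_i)=\inf_{(x_i,y_i)\in\mathcal{F}_i}\big(m_i^{\mathsf T}(Cx_i+Q_iy_i)+p_i\lambda_i^{\mathsf T}x_i\big)$. *)

theory Defs
  imports "HOL-Analysis.Analysis"
begin

text \<open>Omega is a finite type 'w; random vectors in L^J are functions 'w => real^'j.
  Dimensions J, M, N, K, L are the finite index types 'j, 'm, 'n, 'k, 'l.\<close>

definition ones :: "real^'j" where "ones = (\<chi> j. 1)"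

definition acceptance_set ::
  "(('w \<Rightarrow> real^'j) \<Rightarrow> (real^'j) set) \<Rightarrow> ('w \<Rightarrow> real^'j) set" where
  "acceptance_set R = {u. 0 \<in> R u}"

definition multivariate_convex_risk_measure ::
  "(('w::finite \<Rightarrow> real^'j) \<Rightarrow> (real^'j) set) \<Rightarrow> bool" where
  "multivariate_convex_risk_measure R \<longleftrightarrow>
     (\<forall>u v. (\<forall>i j. u i $ j \<le> v i $ j) \<longrightarrow> R v \<subseteq> R u) \<and>
     (\<forall>u z. R (\<lambda>i. u i + z) = (\<lambda>a. a + z) ` R u) \<and>
     (\<forall>u. R u \<noteq> {} \<and> R u \<noteq> UNIV) \<and>
     (\<forall>u v (g::real). 0 < g \<and> g < 1 \<longrightarrow>
        {g *\<^sub>R a + (1 - g) *\<^sub>R b | a b. a \<in> R u \<and> b \<in> R v}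
          \<subseteq> R (\<lambda>i. g *\<^sub>R u i + (1 - g) *\<^sub>R v i)) \<and>
     closed (acceptance_set R)"

text \<open>M_1^J: J-tuples of probability measures on Omega, mu i $ j = mu^j({i}).\<close>
definition prob_tuples :: "('w::finite \<Rightarrow> real^'j) set" where
  "prob_tuples = {mu. (\<forall>i j. 0 \<le> mu i $ j) \<and> (\<forall>j. (\<Sum>i\<in>UNIV. mu i $ j) = 1)}"

definition finite_meas_tuples :: "('w::finite \<Rightarrow> real^'j) set" where
  "finite_meas_tuples = {m. \<forall>i j. 0 \<le> m i $ j}"

definition wEmu :: "real^'j \<Rightarrow> ('w::finite \<Rightarrow> real^'j) \<Rightarrow> ('w \<Rightarrow> real^'j) \<Rightarrow> real" where
  "wEmu w mu u = (\<Sum>i\<in>UNIV. \<Sum>j\<in>UNIV. w $ j * (mu i $ j * u i $ j))"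

definition penalty ::
  "(('w::finite \<Rightarrow> real^'j) \<Rightarrow> (real^'j) set) \<Rightarrow> ('w \<Rightarrow> real^'j) \<Rightarrow> real^'j \<Rightarrow> ereal" where
  "penalty R mu w = (SUP u\<in>acceptance_set R. ereal (wEmu w mu u))"

definition penalty_tilde ::
  "(('w::finite \<Rightarrow> real^'j) \<Rightarrow> (real^'j) set) \<Rightarrow> ('w \<Rightarrow> real^'j) \<Rightarrow> ereal" where
  "penalty_tilde R m = (SUP u\<in>acceptance_set R. ereal (\<Sum>i\<in>UNIV. m i \<bullet> u i))"

definition feas_X ::
  "real^'m^'k \<Rightarrow> real^'k \<Rightarrow> ('w \<Rightarrow> real^'n^'l) \<Rightarrow> ('w \<Rightarrow> real^'m^'l) \<Rightarrow> ('w \<Rightarrow> real^'l)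
    \<Rightarrow> ((real^'m) \<times> ('w \<Rightarrow> real^'n)) set" where
  "feas_X A b W T h = {(x, y). (\<forall>k. 0 \<le> x $ k) \<and> (\<forall>i k. 0 \<le> y i $ k) \<and> A *v x = b \<and>
       (\<forall>i. T i *v x + W i *v y i = h i)}"

definition feas_F ::
  "real^'m^'k \<Rightarrow> real^'k \<Rightarrow> ('w \<Rightarrow> real^'n^'l) \<Rightarrow> ('w \<Rightarrow> real^'m^'l) \<Rightarrow> ('w \<Rightarrow> real^'l)
    \<Rightarrow> 'w \<Rightarrow> ((real^'m) \<times> (real^'n)) set" where
  "feas_F A b W T h i = {(x, y). (\<forall>k. 0 \<le> x $ k) \<and> (\<forall>k. 0 \<le> y $ k) \<and> A *v x = b \<and>
       T i *v x + W i *v y = h i}"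

definition f_dual ::
  "real^'m^'k \<Rightarrow> real^'k \<Rightarrow> real^'m^'j \<Rightarrow> ('w \<Rightarrow> real^'n^'l) \<Rightarrow> ('w \<Rightarrow> real^'m^'l)
    \<Rightarrow> ('w \<Rightarrow> real^'l) \<Rightarrow> ('w \<Rightarrow> real^'n^'j) \<Rightarrow> ('w \<Rightarrow> real)
    \<Rightarrow> 'w \<Rightarrow> real^'j \<Rightarrow> real^'m \<Rightarrow> real^'j \<Rightarrow> real" where
  "f_dual A b C W T h Q p i mui lami g =
     Inf ((\<lambda>(x, y). (\<Sum>j\<in>UNIV. g $ j * (mui $ j * (C *v x + Q i *v y) $ j)) + p i * (lami \<bullet> x))
          ` feas_F A b W T h i)"

definition f_dual_tilde ::
  "real^'m^'k \<Rightarrow> real^'k \<Rightarrow> real^'m^'j \<Rightarrow> ('w \<Rightarrow> real^'n^'l) \<Rightarrow> ('w \<Rightarrow> real^'m^'l)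
    \<Rightarrow> ('w \<Rightarrow> real^'l) \<Rightarrow> ('w \<Rightarrow> real^'n^'j) \<Rightarrow> ('w \<Rightarrow> real)
    \<Rightarrow> 'w \<Rightarrow> real^'j \<Rightarrow> real^'m \<Rightarrow> real" where
  "f_dual_tilde A b C W T h Q p i mi lami =
     Inf ((\<lambda>(x, y). mi \<bullet> (C *v x + Q i *v y) + p i * (lami \<bullet> x)) ` feas_F A b W T h i)"

definition P2 ::
  "(('w \<Rightarrow> real^'j) \<Rightarrow> (real^'j) set) \<Rightarrow> real^'m^'k \<Rightarrow> real^'k \<Rightarrow> real^'m^'j
    \<Rightarrow> ('w \<Rightarrow> real^'n^'l) \<Rightarrow> ('w \<Rightarrow> real^'m^'l) \<Rightarrow> ('w \<Rightarrow> real^'l) \<Rightarrow> ('w \<Rightarrow> real^'n^'j)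
    \<Rightarrow> real^'j \<Rightarrow> ereal" where
  "P2 R A b C W T h Q v = Inf {ereal a | a. \<exists>x y. (x, y) \<in> feas_X A b W T h \<and>
       v + a *\<^sub>R ones \<in> R (\<lambda>i. C *v x + Q i *v y i)}"

end

theory Submission
  imports Defs
begin

lemma cont_mv[continuous_intros]:
  "continuous_on S f \<Longrightarrow> continuous_on S (\<lambda>x. (A::real^'n::finite^'m::finite) *v f x)"
  by (rule bounded_linear.continuous_on[OF matrix_vector_mul_bounded_linear])

lemma risk_parts:
  assumes "multivariate_convex_risk_measure R"
  shows risk_A1: "\<And>u v. (\<forall>i j. u i $ j \<le> v i $ j) \<Longrightarrow> R v \<subseteq> R u"
   and risk_A2: "\<And>u z. R (\<lambda>i. u i + z) = (\<lambda>a. a + z) ` R u"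
   and risk_A3: "\<And>u. R u \<noteq> {}"
   and risk_A4: "\<And>u v g. 0 < g \<Longrightarrow> g < 1 \<Longrightarrow>
        {g *\<^sub>R a + (1 - g) *\<^sub>R b | a b. a \<in> R u \<and> b \<in> R v}
          \<subseteq> R (\<lambda>i. g *\<^sub>R u i + (1 - g) *\<^sub>R v i)"
   and risk_A5: "closed (acceptance_set R)"
  using assms unfolding multivariate_convex_risk_measure_def by auto


lemma risk_down:
  assumes "multivariate_convex_risk_measure R" "u \<in> acceptance_set R" "\<forall>i j. w i $ j \<le> u i $ j"
  shows "w \<in> acceptance_set R"
  using assms(2) risk_A1[OF assms(1) assms(3)] unfolding acceptance_set_def by blast

lemma risk_shift:
  assumes "multivariate_convex_risk_measure R"
  shows "z \<in> R u \<longleftrightarrow> (\<lambda>i. u i - z) \<in> acceptance_set R"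
proof -
  have e: "R (\<lambda>i. u i + (- z)) = (\<lambda>a. a + (- z)) ` R u"
    by (rule risk_A2[OF assms])
  have "(\<lambda>i. u i - z) = (\<lambda>i. u i + (- z))" by simp
  then have "0 \<in> R (\<lambda>i. u i - z) \<longleftrightarrow> 0 \<in> (\<lambda>a. a + (- z)) ` R u" using e by simp
  also have "\<dots> \<longleftrightarrow> z \<in> R u"
  proof
    assume "0 \<in> (\<lambda>a. a + (- z)) ` R u"
    then obtain a where "a \<in> R u" "0 = a + - z" by blast
    then show "z \<in> R u" by (metis add.right_neutral add_minus_cancel add.commute)
  next
    assume "z \<in> R u" then show "0 \<in> (\<lambda>a. a + (- z)) ` R u"
      by (intro image_eqI[of _ _ z]) auto
  qed
  finally show ?thesis unfolding acceptance_set_def by simp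
qed

lemma risk_ne:
  assumes "multivariate_convex_risk_measure R"
  obtains a where "a \<in> acceptance_set R"
proof -
  obtain z where "z \<in> R (\<lambda>i. 0)"
    using risk_A3[OF assms] by blast
  then have "(\<lambda>i. 0 - z) \<in> acceptance_set R" using risk_shift[OF assms, of z "\<lambda>i. 0"] by simp
  then show ?thesis using that by blast
qed

lemma risk_convex:
  assumes "multivariate_convex_risk_measure R" "u \<in> acceptance_set R" "w \<in> acceptance_set R"
    "0 \<le> g" "g \<le> 1"
  shows "(\<lambda>i. g *\<^sub>R u i + (1 - g) *\<^sub>R w i) \<in> acceptance_set R"
proof (cases "g = 0 \<or> g = 1")
  case True
  then show ?thesis using assms by auto
next
  case False
  then have "0 < g" "g < 1" using assms by auto
  note sub = risk_A4[OF assms(1) this, of u w]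
  have "0 \<in> R u" "0 \<in> R w" using assms(2,3) unfolding acceptance_set_def by auto
  then have "g *\<^sub>R 0 + (1 - g) *\<^sub>R 0 \<in> {g *\<^sub>R a + (1 - g) *\<^sub>R b | a b. a \<in> R u \<and> b \<in> R w}"
    by blast
  then have "0 \<in> {g *\<^sub>R a + (1 - g) *\<^sub>R b | a b. a \<in> R u \<and> b \<in> R w}"
    by simp
  then show ?thesis using sub unfolding acceptance_set_def by blast
qed

lemma convex_F: "convex (feas_F A b W T h i)"
proof (rule convexI)
  fix z z' and u v :: real
  assume z: "z \<in> feas_F A b W T h i" and z': "z' \<in> feas_F A b W T h i"
    and uv: "0 \<le> u" "0 \<le> v" "u + v = 1"
  obtain x y where zz: "z = (x, y)" by fastforce
  obtain x' y' where zz': "z' = (x', y')" by fastforce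
  have a: "\<forall>k. 0 \<le> x $ k" "\<forall>k. 0 \<le> y $ k" "T i *v x + W i *v y = h i"
     "\<forall>k. 0 \<le> x' $ k" "\<forall>k. 0 \<le> y' $ k" "A *v x' = b" "A *v x = b" "T i *v x' + W i *v y' = h i"
    using z z' zz zz' unfolding feas_F_def by auto
  have 1: "\<forall>k. 0 \<le> (u *\<^sub>R x + v *\<^sub>R x') $ k" using a uv by (simp add: add_nonneg_nonneg)
  have 2: "\<forall>k. 0 \<le> (u *\<^sub>R y + v *\<^sub>R y') $ k" using a uv by (simp add: add_nonneg_nonneg)
  have "A *v (u *\<^sub>R x + v *\<^sub>R x') = (u + v) *\<^sub>R b" using a
    by (simp add: matrix_vector_right_distrib matrix_vector_mult_scaleR scaleR_add_left)
  then have 3: "A *v (u *\<^sub>R x + v *\<^sub>R x') = b" using uv by simp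
  have "T i *v (u *\<^sub>R x + v *\<^sub>R x') + W i *v (u *\<^sub>R y + v *\<^sub>R y')
      = u *\<^sub>R (T i *v x + W i *v y) + v *\<^sub>R (T i *v x' + W i *v y')"
    by (simp add: matrix_vector_right_distrib matrix_vector_mult_scaleR algebra_simps)
  also have "\<dots> = (u + v) *\<^sub>R h i" using a by (simp add: scaleR_add_left)
  finally have 4: "T i *v (u *\<^sub>R x + v *\<^sub>R x') + W i *v (u *\<^sub>R y + v *\<^sub>R y') = h i"
    using uv by simp
  show "u *\<^sub>R z + v *\<^sub>R z' \<in> feas_F A b W T h i"
    using 1 2 3 4 unfolding zz zz' feas_F_def by simp
qed


definition gfun :: "real^'m::finite^'j::finite \<Rightarrow> real^'n::finite^'j \<Rightarrow> real \<Rightarrow> real^'j \<Rightarrow> real^'m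
   \<Rightarrow> (real^'m) \<times> (real^'n) \<Rightarrow> real" where
  "gfun C Qi pp mi lami z = mi \<bullet> (C *v fst z + Qi *v snd z) + pp * (lami \<bullet> fst z)"

lemma f_dual_tilde_gfun:
  "f_dual_tilde A b C W T h Q p i mi lami = Inf (gfun C (Q i) (p i) mi lami ` feas_F A b W T h i)"
  unfolding f_dual_tilde_def gfun_def by (simp add: case_prod_beta')

lemma gfun_cont: "continuous_on S (gfun C Qi pp mi lami)"
  unfolding gfun_def by (intro continuous_intros)

lemma F_inf_le:
  assumes "compact (feas_F A b W T h i)" "(x, y) \<in> feas_F A b W T h i"
  shows "f_dual_tilde A b C W T h Q p i mi lami \<le> mi \<bullet> (C *v x + Q i *v y) + p i * (lami \<bullet> x)"
proof -
  have "compact (gfun C (Q i) (p i) mi lami ` feas_F A b W T h i)"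
    by (rule compact_continuous_image[OF gfun_cont assms(1)])
  then have "bdd_below (gfun C (Q i) (p i) mi lami ` feas_F A b W T h i)"
    by (intro bounded_imp_bdd_below compact_imp_bounded)
  then have "Inf (gfun C (Q i) (p i) mi lami ` feas_F A b W T h i) \<le> gfun C (Q i) (p i) mi lami (x, y)"
    by (rule cInf_lower[OF imageI[OF assms(2)]])
  then show ?thesis unfolding f_dual_tilde_gfun by (simp add: gfun_def)
qed

lemma F_inf_att:
  assumes "compact (feas_F A b W T h i)" "feas_F A b W T h i \<noteq> {}"
  obtains x y where "(x, y) \<in> feas_F A b W T h i"
    "f_dual_tilde A b C W T h Q p i mi lami = mi \<bullet> (C *v x + Q i *v y) + p i * (lami \<bullet> x)"
proof -
  obtain z where z: "z \<in> feas_F A b W T h i"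
    "\<forall>y\<in>feas_F A b W T h i. gfun C (Q i) (p i) mi lami z \<le> gfun C (Q i) (p i) mi lami y"
    using continuous_attains_inf[OF assms gfun_cont] by blast
  have "f_dual_tilde A b C W T h Q p i mi lami = gfun C (Q i) (p i) mi lami z"
    unfolding f_dual_tilde_gfun using z by (intro cInf_eq_minimum) auto
  then show ?thesis using that[of "fst z" "snd z"] z(1) by (simp add: gfun_def)
qed

lemma weak:
  fixes p :: "'w::finite \<Rightarrow> real"
    and R :: "('w \<Rightarrow> real^'j::finite) \<Rightarrow> (real^'j) set"
    and A :: "real^'m::finite^'k::finite" and b :: "real^'k"
    and C :: "real^'m^'j"
    and W :: "'w \<Rightarrow> real^'n::finite^'l::finite" and T :: "'w \<Rightarrow> real^'m^'l"
    and h :: "'w \<Rightarrow> real^'l" and Q :: "'w \<Rightarrow> real^'n^'j"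
    and v :: "real^'j" and m :: "'w \<Rightarrow> real^'j" and lam :: "'w \<Rightarrow> real^'m"
  assumes risk: "multivariate_convex_risk_measure R"
   and Fc: "\<forall>i. compact (feas_F A b W T h i)"
   and m1: "(\<Sum>i\<in>UNIV. m i \<bullet> ones) = 1" and lam0: "(\<Sum>i\<in>UNIV. p i *\<^sub>R lam i) = 0"
   and X: "(x, y) \<in> feas_X A b W T h"
   and a: "v + a *\<^sub>R ones \<in> R (\<lambda>i. C *v x + Q i *v y i)"
  shows "ereal ((\<Sum>i\<in>UNIV. f_dual_tilde A b C W T h Q p i (m i) (lam i)) - (\<Sum>i\<in>UNIV. m i \<bullet> v))
           - penalty_tilde R m \<le> ereal a"
proof -
  let ?u = "\<lambda>i. C *v x + Q i *v y i - (v + a *\<^sub>R ones)"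
  have uA: "?u \<in> acceptance_set R" using risk_shift[OF risk, of "v + a *\<^sub>R ones" "\<lambda>i. C *v x + Q i *v y i"] a by simp
  have "ereal (\<Sum>i\<in>UNIV. m i \<bullet> ?u i) \<le> penalty_tilde R m"
    unfolding penalty_tilde_def by (rule SUP_upper[OF uA])
  moreover have "(\<Sum>i\<in>UNIV. m i \<bullet> ?u i) = (\<Sum>i\<in>UNIV. m i \<bullet> (C *v x + Q i *v y i)) - (\<Sum>i\<in>UNIV. m i \<bullet> v) - a"
    using m1 by (simp add: inner_diff_right inner_add_right sum_subtractf sum.distrib
        flip: sum_distrib_left)
  ultimately have pen: "ereal ((\<Sum>i\<in>UNIV. m i \<bullet> (C *v x + Q i *v y i)) - (\<Sum>i\<in>UNIV. m i \<bullet> v) - a) \<le> penalty_tilde R m"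
    by simp
  have Fi: "(x, y i) \<in> feas_F A b W T h i" for i using X unfolding feas_X_def feas_F_def by auto
  have "(\<Sum>i\<in>UNIV. f_dual_tilde A b C W T h Q p i (m i) (lam i))
      \<le> (\<Sum>i\<in>UNIV. m i \<bullet> (C *v x + Q i *v y i) + p i * (lam i \<bullet> x))"
    by (intro sum_mono F_inf_le[OF Fc[rule_format] Fi])
  also have "\<dots> = (\<Sum>i\<in>UNIV. m i \<bullet> (C *v x + Q i *v y i)) + (\<Sum>i\<in>UNIV. p i *\<^sub>R lam i) \<bullet> x"
    by (simp add: sum.distrib inner_sum_left)
  finally have SF: "(\<Sum>i\<in>UNIV. f_dual_tilde A b C W T h Q p i (m i) (lam i))
      \<le> (\<Sum>i\<in>UNIV. m i \<bullet> (C *v x + Q i *v y i))" using lam0 by simp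
  show ?thesis
  proof (cases "penalty_tilde R m")
    case (real q) then show ?thesis using pen SF by simp
  next
    case PInf then show ?thesis by simp
  next
    case MInf then show ?thesis using pen by simp
  qed
qed


lemma transform:
  fixes mu :: "'w::finite \<Rightarrow> real^'j::finite" and g :: "real^'j"
  assumes mu: "mu \<in> prob_tuples"
  shows "ereal ((\<Sum>i\<in>UNIV. f_dual A b C W T h Q p i (mu i) (lam i) g) - g \<bullet> v) - penalty R mu g
    = ereal ((\<Sum>i\<in>UNIV. f_dual_tilde A b C W T h Q p i ((\<lambda>i. \<chi> j. g $ j * mu i $ j) i) (lam i))
        - (\<Sum>i\<in>UNIV. (\<lambda>i. \<chi> j. g $ j * mu i $ j) i \<bullet> v))
      - penalty_tilde R (\<lambda>i. \<chi> j. g $ j * mu i $ j)"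
proof -
  have f: "f_dual A b C W T h Q p i (mu i) (lam i) g
     = f_dual_tilde A b C W T h Q p i (\<chi> j. g $ j * mu i $ j) (lam i)" for i
    unfolding f_dual_def f_dual_tilde_def by (simp add: inner_vec_def mult.assoc)
  have "(\<Sum>i\<in>UNIV. (\<chi> j. g $ j * mu i $ j) \<bullet> v) = (\<Sum>i\<in>UNIV. \<Sum>j\<in>UNIV. g $ j * v $ j * mu i $ j)"
    unfolding inner_vec_def by (simp add: algebra_simps)
  also have "\<dots> = (\<Sum>j\<in>UNIV. \<Sum>i\<in>UNIV. g $ j * v $ j * mu i $ j)" by (rule sum.swap)
  also have "\<dots> = (\<Sum>j\<in>UNIV. g $ j * v $ j * (\<Sum>i\<in>UNIV. mu i $ j))" by (simp add: sum_distrib_left)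
  also have "\<dots> = g \<bullet> v" using mu unfolding prob_tuples_def inner_vec_def by simp
  finally have gv: "(\<Sum>i\<in>UNIV. (\<chi> j. g $ j * mu i $ j) \<bullet> v) = g \<bullet> v" .
  have pen: "penalty R mu g = penalty_tilde R (\<lambda>i. \<chi> j. g $ j * mu i $ j)"
    unfolding penalty_def penalty_tilde_def wEmu_def by (simp add: inner_vec_def mult.assoc)
  show ?thesis using f gv pen by simp
qed

lemma transform_mem:
  fixes mu :: "'w::finite \<Rightarrow> real^'j::finite" and g :: "real^'j"
  assumes mu: "mu \<in> prob_tuples" and g: "\<forall>j. 0 \<le> g $ j" "g \<bullet> ones = 1"
  shows "(\<lambda>i. \<chi> j. g $ j * mu i $ j) \<in> finite_meas_tuples"
    "(\<Sum>i\<in>UNIV. (\<lambda>i. \<chi> j. g $ j * mu i $ j) i \<bullet> ones) = 1"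
proof -
  show "(\<lambda>i. \<chi> j. g $ j * mu i $ j) \<in> finite_meas_tuples"
    using mu g unfolding prob_tuples_def finite_meas_tuples_def by simp
  have "(\<Sum>i\<in>UNIV. (\<lambda>i. \<chi> j. g $ j * mu i $ j) i \<bullet> ones) = (\<Sum>j\<in>UNIV. g $ j * (\<Sum>i\<in>UNIV. mu i $ j))"
    unfolding inner_vec_def ones_def by (simp add: sum_distrib_left, rule sum.swap)
  also have "\<dots> = 1" using mu g unfolding prob_tuples_def inner_vec_def ones_def by simp
  finally show "(\<Sum>i\<in>UNIV. (\<lambda>i. \<chi> j. g $ j * mu i $ j) i \<bullet> ones) = 1" .
qed

lemma transform_back:
  fixes m :: "'w::finite \<Rightarrow> real^'j::finite"
  assumes m: "m \<in> finite_meas_tuples" "(\<Sum>i\<in>UNIV. m i \<bullet> ones) = 1"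
  obtains mu g where "mu \<in> prob_tuples" "\<forall>j. 0 \<le> g $ j" "g \<bullet> ones = 1"
    "(\<lambda>i. \<chi> j. g $ j * mu i $ j) = m"
proof -
  define g :: "real^'j" where "g = (\<chi> j. \<Sum>i\<in>UNIV. m i $ j)"
  define mu :: "'w \<Rightarrow> real^'j" where
    "mu = (\<lambda>i. \<chi> j. if g $ j > 0 then m i $ j / g $ j else 1 / real CARD('w))"
  have mnn: "0 \<le> m i $ j" for i j using m unfolding finite_meas_tuples_def by auto
  have gnn: "\<forall>j. 0 \<le> g $ j" unfolding g_def using mnn by (simp add: sum_nonneg)
  have "g \<bullet> ones = (\<Sum>i\<in>UNIV. m i \<bullet> ones)"
    unfolding g_def inner_vec_def ones_def by (simp, rule sum.swap)
  then have g1: "g \<bullet> ones = 1" using m by simp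
  have "mu \<in> prob_tuples"
    unfolding prob_tuples_def
  proof (intro CollectI conjI allI)
    fix i j show "0 \<le> mu i $ j" unfolding mu_def using mnn gnn by simp
  next
    fix j show "(\<Sum>i\<in>UNIV. mu i $ j) = 1"
    proof (cases "g $ j > 0")
      case True
      then have "(\<Sum>i\<in>UNIV. mu i $ j) = (\<Sum>i\<in>UNIV. m i $ j) / g $ j"
        unfolding mu_def by (simp add: sum_divide_distrib)
      also have "\<dots> = 1" using True unfolding g_def by simp
      finally show ?thesis .
    next
      case False then show ?thesis unfolding mu_def by simp
    qed
  qed
  moreover have "(\<lambda>i. \<chi> j. g $ j * mu i $ j) = m"
  proof (intro ext, unfold vec_eq_iff, intro allI)
    fix i j
    show "(\<chi> j. g $ j * mu i $ j) $ j = m i $ j"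
    proof (cases "g $ j > 0")
      case True then show ?thesis unfolding mu_def by simp
    next
      case False
      then have "g $ j = 0" using gnn[rule_format, of j] by linarith
      then have "(\<Sum>i\<in>UNIV. m i $ j) = 0" unfolding g_def by simp
      then have "m i $ j = 0" using sum_nonneg_eq_0_iff[of UNIV "\<lambda>i. m i $ j"] mnn by simp
      then show ?thesis using \<open>g $ j = 0\<close> by simp
    qed
  qed
  ultimately show ?thesis using that gnn g1 by blast
qed


lemma compact_prodset:
  fixes F :: "'w::finite \<Rightarrow> ('a::euclidean_space) set"
  assumes "\<forall>i. compact (F i)"
  shows "compact {z::'a^'w. \<forall>i. z$i \<in> F i}"
proof -
  have eq: "{z::'a^'w. \<forall>i. z$i \<in> F i} = (\<Inter>i\<in>UNIV. (\<lambda>z. z$i) -` F i)" by auto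
  have cl: "closed {z::'a^'w. \<forall>i. z$i \<in> F i}"
    unfolding eq using assms by (intro closed_INT ballI closed_vimage_vec_nth compact_imp_closed) auto
  have "\<forall>i. \<exists>B. \<forall>x\<in>F i. norm x \<le> B"
    using assms by (metis compact_imp_bounded bounded_iff)
  then obtain B where B: "\<And>i x. x \<in> F i \<Longrightarrow> norm x \<le> B i" by metis
  have "norm z \<le> (\<Sum>i\<in>UNIV. B i)" if "z \<in> {z::'a^'w. \<forall>i. z$i \<in> F i}" for z
  proof -
    have "norm z \<le> (\<Sum>i\<in>UNIV. norm (z$i))" unfolding norm_vec_def by (rule L2_set_le_sum) simp
    also have "\<dots> \<le> (\<Sum>i\<in>UNIV. B i)" using that B by (intro sum_mono) auto
    finally show ?thesis .
  qed
  then have "bounded {z::'a^'w. \<forall>i. z$i \<in> F i}" unfolding bounded_iff by blast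
  then show ?thesis using cl by (simp add: compact_eq_bounded_closed)
qed

lemma convex_prodset:
  fixes F :: "'w::finite \<Rightarrow> ('a::euclidean_space) set"
  assumes "\<forall>i. convex (F i)"
  shows "convex {z::'a^'w. \<forall>i. z$i \<in> F i}"
proof (rule convexI, clarsimp)
  fix x y :: "'a^'w" and u v :: real and i
  assume "0 \<le> u" "0 \<le> v" "u + v = 1" "\<forall>i. x $ i \<in> F i" "\<forall>i. y $ i \<in> F i"
  then show "u *\<^sub>R x $ i + v *\<^sub>R y $ i \<in> F i"
    using assms convexD[of "F i" "x$i" "y$i" u v] by auto
qed


definition Phi :: "real^'m::finite^'j::finite \<Rightarrow> ('w::finite \<Rightarrow> real^'n::finite^'j) \<Rightarrow> ('w \<Rightarrow> real) \<Rightarrow> real^'j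
   \<Rightarrow> ((real^'m) \<times> (real^'n))^'w \<Rightarrow> (real^'j^'w) \<times> (real^'m^'w)" where
 "Phi C Q p v z = ((\<chi> i. C *v fst (z$i) + Q i *v snd (z$i) - v),
                   (\<chi> i. fst (z$i) - (\<Sum>k\<in>UNIV. p k *\<^sub>R fst (z$k))))"

lemma Phi_cont: "continuous_on S (Phi C Q p v)"
  unfolding Phi_def by (intro continuous_intros)

lemma Phi_affine:
  assumes "u + w = 1"
  shows "Phi C Q p v (u *\<^sub>R z + w *\<^sub>R z') = u *\<^sub>R Phi C Q p v z + w *\<^sub>R Phi C Q p v z'"
proof -
  have w: "w = 1 - u" using assms by simp
  show ?thesis unfolding w Phi_def
    by (simp add: vec_eq_iff algebra_simps matrix_vector_right_distrib matrix_vector_mult_scaleR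
        scaleR_sum_right sum.distrib sum_subtractf)
qed


lemma inner_chi: "x \<bullet> (\<chi> i. f i) = (\<Sum>i\<in>UNIV. x$i \<bullet> f i)"
  by (subst inner_vec_def) simp

lemma strong:
  fixes p :: "'w::finite \<Rightarrow> real"
    and R :: "('w \<Rightarrow> real^'j::finite) \<Rightarrow> (real^'j) set"
    and A :: "real^'m::finite^'k::finite" and b :: "real^'k"
    and C :: "real^'m^'j"
    and W :: "'w \<Rightarrow> real^'n::finite^'l::finite" and T :: "'w \<Rightarrow> real^'m^'l"
    and h :: "'w \<Rightarrow> real^'l" and Q :: "'w \<Rightarrow> real^'n^'j"
    and v :: "real^'j" and r :: real
  assumes p_pos: "\<forall>i. p i > 0" and p_sum: "(\<Sum>i\<in>UNIV. p i) = 1"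
    and risk: "multivariate_convex_risk_measure R"
    and X_ne: "feas_X A b W T h \<noteq> {}"
    and F_ne: "\<forall>i. feas_F A b W T h i \<noteq> {}" and Fc: "\<forall>i. compact (feas_F A b W T h i)"
    and r: "ereal r < P2 R A b C W T h Q v"
  shows "\<exists>m lam. m \<in> finite_meas_tuples \<and> (\<Sum>i\<in>UNIV. m i \<bullet> ones) = 1 \<and>
           (\<Sum>i\<in>UNIV. p i *\<^sub>R lam i) = 0 \<and>
           ereal r \<le> ereal ((\<Sum>i\<in>UNIV. f_dual_tilde A b C W T h Q p i (m i) (lam i))
                     - (\<Sum>i\<in>UNIV. m i \<bullet> v)) - penalty_tilde R m"
proof -
  define Z where "Z = {z::((real^'m) \<times> (real^'n))^'w. \<forall>i. z$i \<in> feas_F A b W T h i}"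
  define K where "K = Phi C Q p v ` Z"
  define Ac where "Ac = {U :: real^'j^'w. (\<lambda>i. U$i - r *\<^sub>R ones) \<in> acceptance_set R}"
  define B where "B = Ac \<times> {0 :: real^'m^'w}"
  obtain x0 y0 where X0: "(x0, y0) \<in> feas_X A b W T h" using X_ne by auto
  define z0 where "z0 = (\<chi> i. (x0, y0 i))"
  have z0Z: "z0 \<in> Z" using X0 unfolding z0_def Z_def feas_X_def feas_F_def by auto
  have Phi_z0: "snd (Phi C Q p v z0) = 0"
  proof -
    have "(\<Sum>k\<in>UNIV. p k *\<^sub>R x0) = x0" using p_sum by (simp flip: scaleR_sum_left)
    then show ?thesis unfolding Phi_def z0_def by (simp add: vec_eq_iff)
  qed
  have cZ: "compact Z" unfolding Z_def by (rule compact_prodset) (use Fc in blast)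
  have vZ: "convex Z" unfolding Z_def by (rule convex_prodset) (simp add: convex_F)
  have cK: "compact K" unfolding K_def by (rule compact_continuous_image[OF Phi_cont cZ])
  have vK: "convex K" unfolding K_def
  proof (rule convexI)
    fix x y u w assume "x \<in> Phi C Q p v ` Z" "y \<in> Phi C Q p v ` Z" "0 \<le> u" "0 \<le> (w::real)" "u + w = 1"
    then obtain zx zy where zz: "zx \<in> Z" "zy \<in> Z" "x = Phi C Q p v zx" "y = Phi C Q p v zy"
      "0 \<le> u" "0 \<le> w" "u + w = 1" by blast
    then have "u *\<^sub>R zx + w *\<^sub>R zy \<in> Z" using convexD[OF vZ] by blast
    moreover have "u *\<^sub>R x + w *\<^sub>R y = Phi C Q p v (u *\<^sub>R zx + w *\<^sub>R zy)"
      using zz Phi_affine[of u w C Q p v] by simp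
    ultimately show "u *\<^sub>R x + w *\<^sub>R y \<in> Phi C Q p v ` Z" by blast
  qed
  have neK: "K \<noteq> {}" unfolding K_def using z0Z by blast
  have clAc: "closed Ac"
  proof -
    have "continuous_on UNIV (\<lambda>U :: real^'j^'w. (\<lambda>i. U$i - r *\<^sub>R ones))"
      by (intro continuous_on_coordinatewise_then_product continuous_intros)
    then show ?thesis unfolding Ac_def using closed_vimage[OF risk_A5[OF risk]] by (simp add: vimage_def)
  qed
  have vAc: "convex Ac" unfolding Ac_def
  proof (rule convexI, clarsimp)
    fix x y :: "real^'j^'w" and u w :: real
    assume a: "(\<lambda>i. x $ i - r *\<^sub>R ones) \<in> acceptance_set R" "(\<lambda>i. y $ i - r *\<^sub>R ones) \<in> acceptance_set R"
      "0 \<le> u" "0 \<le> w" "u + w = 1"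
    have w1: "1 - u = w" using a(5) by simp
    have "(\<lambda>i. u *\<^sub>R (x $ i - r *\<^sub>R ones) + w *\<^sub>R (y $ i - r *\<^sub>R ones)) \<in> acceptance_set R"
      using risk_convex[OF risk a(1,2), of u] a unfolding w1 by simp
    moreover have "u *\<^sub>R (X - r *\<^sub>R ones) + w *\<^sub>R (Y - r *\<^sub>R ones) = u *\<^sub>R X + w *\<^sub>R Y - (u + w) *\<^sub>R (r *\<^sub>R ones)"
      for X Y :: "real^'j" by (simp add: algebra_simps)
    then have "(\<lambda>i. u *\<^sub>R (x $ i - r *\<^sub>R ones) + w *\<^sub>R (y $ i - r *\<^sub>R ones))
       = (\<lambda>i. u *\<^sub>R x $ i + w *\<^sub>R y $ i - r *\<^sub>R ones)"
      using a(5) by simp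
    ultimately show "(\<lambda>i. u *\<^sub>R x $ i + w *\<^sub>R y $ i - r *\<^sub>R ones) \<in> acceptance_set R" by simp
  qed
  have clB: "closed B" unfolding B_def by (intro closed_Times clAc closed_singleton)
  have vB: "convex B" unfolding B_def by (intro convex_Times vAc convex_singleton)
  have disj: "K \<inter> B = {}"
  proof (rule ccontr)
    assume "K \<inter> B \<noteq> {}"
    then obtain z where zZ: "z \<in> Z" and PB: "Phi C Q p v z \<in> B" unfolding K_def by blast
    define xb where "xb = (\<Sum>k\<in>UNIV. p k *\<^sub>R fst (z$k))"
    define yb where "yb = (\<lambda>i. snd (z$i))"
    have "snd (Phi C Q p v z) = 0" using PB unfolding B_def by auto
    then have "(\<chi> i. fst (z$i) - xb) = 0" unfolding Phi_def xb_def by simp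
    then have "(\<chi> i. fst (z$i) - xb) $ i = (0::real^'m^'w) $ i" for i by (simp only:)
    then have xi: "fst (z$i) = xb" for i by simp
    have zi: "z$i = (xb, yb i)" for i unfolding yb_def by (simp add: prod_eq_iff xi)
    have Fi: "(xb, yb i) \<in> feas_F A b W T h i" for i
    proof -
      have "z$i \<in> feas_F A b W T h i" using zZ unfolding Z_def by blast
      then show ?thesis using zi by simp
    qed
    have X1: "\<forall>k. 0 \<le> xb$k" "A *v xb = b" using Fi[of undefined] unfolding feas_F_def by auto
    have X2: "\<forall>i k. 0 \<le> yb i $k" "\<forall>i. T i *v xb + W i *v yb i = h i"
      using Fi unfolding feas_F_def by auto
    have Xb: "(xb, yb) \<in> feas_X A b W T h"
      using X1 X2 unfolding feas_X_def by simp
    have "fst (Phi C Q p v z) \<in> Ac" using PB unfolding B_def by auto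
    then have "(\<lambda>i. C *v xb + Q i *v yb i - v - r *\<^sub>R ones) \<in> acceptance_set R"
      unfolding Ac_def Phi_def using zi by simp
    then have "(\<lambda>i. C *v xb + Q i *v yb i - (v + r *\<^sub>R ones)) \<in> acceptance_set R"
      by (simp add: diff_diff_eq)
    then have "v + r *\<^sub>R ones \<in> R (\<lambda>i. C *v xb + Q i *v yb i)"
      using risk_shift[OF risk, of "v + r *\<^sub>R ones" "\<lambda>i. C *v xb + Q i *v yb i"] by simp
    then have "ereal r \<in> {ereal a | a. \<exists>x y. (x, y) \<in> feas_X A b W T h \<and>
       v + a *\<^sub>R ones \<in> R (\<lambda>i. C *v x + Q i *v y i)}" using Xb by blast
    then have "P2 R A b C W T h Q v \<le> ereal r" unfolding P2_def by (rule Inf_lower)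
    then show False using r by simp
  qed
  obtain a c where sepK: "\<forall>x\<in>K. inner a x < c" and sepB: "\<forall>x\<in>B. inner a x > c"
    using separating_hyperplane_compact_closed[OF vK cK neK vB clB disj] by blast
  obtain a1 a2 where a12: "a = (a1, a2)" by fastforce
  define mm where "mm = - a1"
  define nn where "nn = - a2"
  define c' where "c' = - c"
  have sB: "inner mm U < c'" if "U \<in> Ac" for U
    using sepB that unfolding B_def a12 mm_def c'_def by auto
  have sK: "inner mm (fst (Phi C Q p v z)) + inner nn (snd (Phi C Q p v z)) > c'" if "z \<in> Z" for z
  proof -
    have "inner a (Phi C Q p v z) < c" using sepK that unfolding K_def by blast
    then show ?thesis unfolding a12 mm_def nn_def c'_def
      by (cases "Phi C Q p v z") (simp add: inner_minus_left)
  qed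
  obtain a0 where a0: "a0 \<in> acceptance_set R" using risk_ne[OF risk] by blast
  define U0 where "U0 = (\<chi> i. a0 i + r *\<^sub>R ones)"
  have U0Ac: "U0 \<in> Ac" unfolding U0_def Ac_def using a0 by simp
  have mm_nn: "0 \<le> mm $ i $ j" for i j
  proof (rule ccontr)
    assume "\<not> 0 \<le> mm $ i $ j"
    then have d: "- mm $ i $ j > 0" by simp
    define t where "t = (c' - inner mm U0) / (- mm $ i $ j)"
    have t0: "t \<ge> 0" unfolding t_def using sB[OF U0Ac] d by (intro divide_nonneg_pos) auto
    define U1 where "U1 = U0 - t *\<^sub>R axis i (axis j 1)"
    have "(\<lambda>i'. U1 $ i' - r *\<^sub>R ones) \<in> acceptance_set R"
    proof (rule risk_down[OF risk])
      show "(\<lambda>i. U0 $ i - r *\<^sub>R ones) \<in> acceptance_set R" using U0Ac unfolding Ac_def by simp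
      show "\<forall>i' j'. (U1 $ i' - r *\<^sub>R ones) $ j' \<le> (U0 $ i' - r *\<^sub>R ones) $ j'"
        unfolding U1_def using t0 by (simp add: axis_def)
    qed
    then have "U1 \<in> Ac" unfolding Ac_def by simp
    then have "inner mm U1 < c'" by (rule sB)
    moreover have "inner mm U1 = inner mm U0 - t * mm $ i $ j"
      unfolding U1_def by (simp add: inner_diff_right inner_axis)
    moreover have "t * (- mm $ i $ j) = c' - inner mm U0" unfolding t_def using d by simp
    ultimately show False by simp
  qed
  define s where "s = (\<Sum>i\<in>UNIV. mm $ i \<bullet> ones)"
  have mmi_ones: "mm $ i \<bullet> ones = (\<Sum>j\<in>UNIV. mm $ i $ j)" for i
    unfolding inner_vec_def ones_def by simp
  have s0: "s \<ge> 0" unfolding s_def mmi_ones using mm_nn by (simp add: sum_nonneg)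
  have sne: "s \<noteq> 0"
  proof
    assume "s = 0"
    then have "(\<Sum>i\<in>UNIV. \<Sum>j\<in>UNIV. mm $ i $ j) = 0" unfolding s_def mmi_ones by simp
    then have "\<forall>i. (\<Sum>j\<in>UNIV. mm $ i $ j) = 0"
      using sum_nonneg_eq_0_iff[of UNIV "\<lambda>i. \<Sum>j\<in>UNIV. mm $ i $ j"] mm_nn by (simp add: sum_nonneg)
    then have "\<forall>i j. mm $ i $ j = 0"
      using sum_nonneg_eq_0_iff[of UNIV "\<lambda>j. mm $ _ $ j"] mm_nn by simp
    then have mm0: "mm = 0" by (simp add: vec_eq_iff)
    have "0 < c'" using sB[OF U0Ac] mm0 by simp
    moreover have "c' < 0" using sK[OF z0Z] mm0 Phi_z0 by simp
    ultimately show False by simp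
  qed
  then have spos: "s > 0" using s0 by simp
  define m where "m = (\<lambda>i. (1 / s) *\<^sub>R mm $ i)"
  define N where "N = (\<Sum>i\<in>UNIV. nn $ i)"
  define lam where "lam = (\<lambda>i. (1 / s) *\<^sub>R ((1 / p i) *\<^sub>R nn $ i - N))"
  have m_fmt: "m \<in> finite_meas_tuples" unfolding m_def finite_meas_tuples_def using mm_nn spos by simp
  have m_one: "(\<Sum>i\<in>UNIV. m i \<bullet> ones) = 1"
    unfolding m_def using sne by (simp add: s_def flip: sum_divide_distrib)
  have lam0: "(\<Sum>i\<in>UNIV. p i *\<^sub>R lam i) = 0"
  proof -
    have "p i *\<^sub>R lam i = (1 / s) *\<^sub>R (nn $ i - p i *\<^sub>R N)" for i
      unfolding lam_def using p_pos[rule_format, of i] by (simp add: algebra_simps)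
    then have "(\<Sum>i\<in>UNIV. p i *\<^sub>R lam i) = (1 / s) *\<^sub>R (N - (\<Sum>i\<in>UNIV. p i) *\<^sub>R N)"
      by (simp add: N_def sum_subtractf scaleR_sum_left flip: scaleR_sum_right)
    then show ?thesis using p_sum by simp
  qed
  have "\<forall>i. \<exists>xy. xy \<in> feas_F A b W T h i \<and>
     f_dual_tilde A b C W T h Q p i (m i) (lam i) = m i \<bullet> (C *v fst xy + Q i *v snd xy) + p i * (lam i \<bullet> fst xy)"
  proof
    fix i
    obtain x y where "(x, y) \<in> feas_F A b W T h i"
      "f_dual_tilde A b C W T h Q p i (m i) (lam i) = m i \<bullet> (C *v x + Q i *v y) + p i * (lam i \<bullet> x)"
      using F_inf_att[OF Fc[rule_format] F_ne[rule_format], of i] by blast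
    then show "\<exists>xy. xy \<in> feas_F A b W T h i \<and>
     f_dual_tilde A b C W T h Q p i (m i) (lam i) = m i \<bullet> (C *v fst xy + Q i *v snd xy) + p i * (lam i \<bullet> fst xy)"
      by (intro exI[of _ "(x, y)"]) simp
  qed
  then obtain zs where zs: "\<And>i. zs i \<in> feas_F A b W T h i"
    "\<And>i. f_dual_tilde A b C W T h Q p i (m i) (lam i) = m i \<bullet> (C *v fst (zs i) + Q i *v snd (zs i)) + p i * (lam i \<bullet> fst (zs i))"
    by metis
  define xs where "xs = (\<lambda>i. fst (zs i))"
  define ys where "ys = (\<lambda>i. snd (zs i))"
  define zst where "zst = (\<chi> i. zs i)"
  have zstZ: "zst \<in> Z" unfolding zst_def Z_def using zs(1) by simp
  define Xb where "Xb = (\<Sum>k\<in>UNIV. p k *\<^sub>R xs k)"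
  have E1: "inner mm (fst (Phi C Q p v zst)) = (\<Sum>i\<in>UNIV. mm $ i \<bullet> (C *v xs i + Q i *v ys i)) - (\<Sum>i\<in>UNIV. mm $ i \<bullet> v)"
    unfolding Phi_def zst_def xs_def ys_def by (simp add: inner_chi inner_diff_right sum_subtractf)
  have E2: "inner nn (snd (Phi C Q p v zst)) = (\<Sum>i\<in>UNIV. nn $ i \<bullet> xs i) - (\<Sum>i\<in>UNIV. p i * (N \<bullet> xs i))"
  proof -
    have "inner nn (snd (Phi C Q p v zst)) = (\<Sum>i\<in>UNIV. nn $ i \<bullet> xs i) - (\<Sum>i\<in>UNIV. nn $ i \<bullet> Xb)"
      unfolding Phi_def zst_def xs_def Xb_def by (simp add: inner_chi inner_diff_right sum_subtractf)
    also have "(\<Sum>i\<in>UNIV. nn $ i \<bullet> Xb) = N \<bullet> Xb" unfolding N_def by (simp add: inner_sum_left)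
    also have "\<dots> = (\<Sum>i\<in>UNIV. p i * (N \<bullet> xs i))" unfolding Xb_def by (simp add: inner_sum_right)
    finally show ?thesis .
  qed
  have E4: "s * f_dual_tilde A b C W T h Q p i (m i) (lam i)
     = mm $ i \<bullet> (C *v xs i + Q i *v ys i) + nn $ i \<bullet> xs i - p i * (N \<bullet> xs i)" for i
  proof -
    have pi: "p i \<noteq> 0" using p_pos[rule_format, of i] by simp
    have "s * (m i \<bullet> (C *v xs i + Q i *v ys i)) = mm $ i \<bullet> (C *v xs i + Q i *v ys i)"
      unfolding m_def using sne by simp
    moreover have "s * (p i * (lam i \<bullet> xs i)) = nn $ i \<bullet> xs i - p i * (N \<bullet> xs i)"
      unfolding lam_def using sne pi by (simp add: inner_diff_left field_simps)
    ultimately show ?thesis using zs(2)[of i] unfolding xs_def ys_def by (simp add: distrib_left)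
  qed
  have E5: "s * (\<Sum>i\<in>UNIV. m i \<bullet> v) = (\<Sum>i\<in>UNIV. mm $ i \<bullet> v)"
    unfolding sum_distrib_left m_def using sne by simp
  define D where "D = (\<Sum>i\<in>UNIV. f_dual_tilde A b C W T h Q p i (m i) (lam i)) - (\<Sum>i\<in>UNIV. m i \<bullet> v)"
  have "s * D = inner mm (fst (Phi C Q p v zst)) + inner nn (snd (Phi C Q p v zst))"
  proof -
    have "s * D = s * (\<Sum>i\<in>UNIV. f_dual_tilde A b C W T h Q p i (m i) (lam i)) - (\<Sum>i\<in>UNIV. mm $ i \<bullet> v)"
      unfolding D_def right_diff_distrib E5 ..
    also have "s * (\<Sum>i\<in>UNIV. f_dual_tilde A b C W T h Q p i (m i) (lam i))
       = (\<Sum>i\<in>UNIV. mm $ i \<bullet> (C *v xs i + Q i *v ys i) + nn $ i \<bullet> xs i - p i * (N \<bullet> xs i))"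
      unfolding sum_distrib_left E4 ..
    finally show ?thesis unfolding E1 E2 by (simp add: sum.distrib sum_subtractf)
  qed
  then have "c' < s * D" using sK[OF zstZ] by simp
  then have D: "c' / s < D" using spos by (simp add: pos_divide_less_eq mult.commute)
  have pen_ub: "penalty_tilde R m \<le> ereal (c' / s - r)"
    unfolding penalty_tilde_def
  proof (rule SUP_least)
    fix u assume u: "u \<in> acceptance_set R"
    define U where "U = (\<chi> i. u i + r *\<^sub>R ones)"
    have "U \<in> Ac" unfolding U_def Ac_def using u by simp
    then have "inner mm U < c'" by (rule sB)
    moreover have "inner mm U = s * (\<Sum>i\<in>UNIV. m i \<bullet> u i) + r * s"
    proof -
      have "inner mm U = (\<Sum>i\<in>UNIV. mm $ i \<bullet> u i) + r * s"
        unfolding U_def s_def by (simp add: inner_chi inner_add_right sum.distrib sum_distrib_left)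
      moreover have "(\<Sum>i\<in>UNIV. mm $ i \<bullet> u i) = s * (\<Sum>i\<in>UNIV. m i \<bullet> u i)"
        unfolding m_def sum_distrib_left using sne by simp
      ultimately show ?thesis by simp
    qed
    ultimately have "s * ((\<Sum>i\<in>UNIV. m i \<bullet> u i) + r) < c'" by (simp add: algebra_simps)
    then have "(\<Sum>i\<in>UNIV. m i \<bullet> u i) + r < c' / s" using spos by (simp add: pos_less_divide_eq mult.commute)
    then show "ereal (\<Sum>i\<in>UNIV. m i \<bullet> u i) \<le> ereal (c' / s - r)" by simp
  qed
  have pen_lb: "ereal (\<Sum>i\<in>UNIV. m i \<bullet> a0 i) \<le> penalty_tilde R m"
    unfolding penalty_tilde_def by (rule SUP_upper[OF a0])
  have "ereal r \<le> ereal D - penalty_tilde R m"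
  proof (cases "penalty_tilde R m")
    case (real q) then show ?thesis using pen_ub D by simp
  next
    case PInf then show ?thesis using pen_ub by simp
  next
    case MInf then show ?thesis using pen_lb by simp
  qed
  then show ?thesis using m_fmt m_one lam0 unfolding D_def by blast
qed

theorem theorem5p6:
  fixes p :: "'w::finite \<Rightarrow> real"
    and R :: "('w \<Rightarrow> real^'j::finite) \<Rightarrow> (real^'j) set"
    and A :: "real^'m::finite^'k::finite" and b :: "real^'k"
    and C :: "real^'m^'j"
    and W :: "'w \<Rightarrow> real^'n::finite^'l::finite" and T :: "'w \<Rightarrow> real^'m^'l"
    and h :: "'w \<Rightarrow> real^'l" and Q :: "'w \<Rightarrow> real^'n^'j"
    and v :: "real^'j"
  assumes card_w: "CARD('w) \<ge> 2"
    and p_pos: "\<forall>i. p i > 0" and p_sum: "(\<Sum>i\<in>UNIV. p i) = 1"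
    and risk: "multivariate_convex_risk_measure R"
    and X_ne: "feas_X A b W T h \<noteq> {}" and X_compact: "compact (feas_X A b W T h)"
    and F_ne: "\<forall>i. feas_F A b W T h i \<noteq> {}" and F_compact: "\<forall>i. compact (feas_F A b W T h i)"
  shows "P2 R A b C W T h Q v =
           (SUP (mu, lam, g) \<in> {(mu, lam, g) | (mu :: 'w \<Rightarrow> real^'j) (lam :: 'w \<Rightarrow> real^'m) (g :: real^'j).
                 mu \<in> prob_tuples \<and> (\<forall>j. 0 \<le> g $ j) \<and> g \<bullet> ones = 1 \<and>
                 (\<Sum>i\<in>UNIV. p i *\<^sub>R lam i) = 0}.
              ereal ((\<Sum>i\<in>UNIV. f_dual A b C W T h Q p i (mu i) (lam i) g) - g \<bullet> v)
                - penalty R mu g)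
         \<and> P2 R A b C W T h Q v =
           (SUP (m, lam) \<in> {(m, lam) | (m :: 'w \<Rightarrow> real^'j) (lam :: 'w \<Rightarrow> real^'m).
                 m \<in> finite_meas_tuples \<and> (\<Sum>i\<in>UNIV. m i \<bullet> ones) = 1 \<and>
                 (\<Sum>i\<in>UNIV. p i *\<^sub>R lam i) = 0}.
              ereal ((\<Sum>i\<in>UNIV. f_dual_tilde A b C W T h Q p i (m i) (lam i))
                     - (\<Sum>i\<in>UNIV. m i \<bullet> v))
                - penalty_tilde R m)"
proof -
  define val2 where "val2 = (\<lambda>m lam. ereal ((\<Sum>i\<in>UNIV. f_dual_tilde A b C W T h Q p i (m i) (lam i))
                     - (\<Sum>i\<in>UNIV. m i \<bullet> v)) - penalty_tilde R m)"
  have W: "val2 m lam \<le> P2 R A b C W T h Q v"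
    if "(\<Sum>i\<in>UNIV. m i \<bullet> ones) = 1" "(\<Sum>i\<in>UNIV. p i *\<^sub>R lam i) = 0" for m lam
    unfolding P2_def
  proof (rule Inf_greatest)
    fix e assume "e \<in> {ereal a | a. \<exists>x y. (x, y) \<in> feas_X A b W T h \<and>
       v + a *\<^sub>R ones \<in> R (\<lambda>i. C *v x + Q i *v y i)}"
    then obtain a x y where "e = ereal a" "(x, y) \<in> feas_X A b W T h"
       "v + a *\<^sub>R ones \<in> R (\<lambda>i. C *v x + Q i *v y i)" by blast
    then show "val2 m lam \<le> e" unfolding val2_def using weak[OF risk F_compact that] by simp
  qed
  have St: "\<exists>m lam. m \<in> finite_meas_tuples \<and> (\<Sum>i\<in>UNIV. m i \<bullet> ones) = 1 \<and>
           (\<Sum>i\<in>UNIV. p i *\<^sub>R lam i) = 0 \<and> ereal r \<le> val2 m lam"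
    if "ereal r < P2 R A b C W T h Q v" for r
    unfolding val2_def using strong[OF p_pos p_sum risk X_ne F_ne F_compact that] by blast
  have dense: "P2 R A b C W T h Q v \<le> z"
    if H: "\<And>r. ereal r < P2 R A b C W T h Q v \<Longrightarrow> ereal r \<le> z" for z
  proof (rule dense_le)
    fix y assume y: "y < P2 R A b C W T h Q v"
    show "y \<le> z"
    proof (cases y)
      case (real r) then show ?thesis using H y by simp
    next
      case PInf then show ?thesis using y by simp
    next
      case MInf then show ?thesis by simp
    qed
  qed
  show ?thesis (is "?P = Sup (?f1 ` ?S1) \<and> ?P = Sup (?f2 ` ?S2)")
  proof
    show "?P = Sup (?f2 ` ?S2)"
    proof (rule antisym)
      show "Sup (?f2 ` ?S2) \<le> ?P"
        by (rule SUP_least) (auto simp: val2_def[symmetric] intro!: W)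
      show "?P \<le> Sup (?f2 ` ?S2)"
      proof (rule dense)
        fix r assume "ereal r < ?P"
        then obtain m lam where ml: "m \<in> finite_meas_tuples" "(\<Sum>i\<in>UNIV. m i \<bullet> ones) = 1"
           "(\<Sum>i\<in>UNIV. p i *\<^sub>R lam i) = 0" "ereal r \<le> val2 m lam" using St by blast
        have "(m, lam) \<in> ?S2" using ml by blast
        then have "?f2 (m, lam) \<le> Sup (?f2 ` ?S2)" by (rule SUP_upper)
        then show "ereal r \<le> Sup (?f2 ` ?S2)" using ml(4) unfolding val2_def by simp
      qed
    qed
  next
    show "?P = Sup (?f1 ` ?S1)"
    proof (rule antisym)
      show "Sup (?f1 ` ?S1) \<le> ?P"
      proof (rule SUP_least)
        fix x assume "x \<in> ?S1"
        then obtain mu lam g where x: "x = (mu, lam, g)" "mu \<in> prob_tuples" "\<forall>j. 0 \<le> g $ j"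
          "g \<bullet> ones = 1" "(\<Sum>i\<in>UNIV. p i *\<^sub>R lam i) = 0" by blast
        have "?f1 x = val2 (\<lambda>i. \<chi> j. g $ j * mu i $ j) lam"
          unfolding x(1) val2_def using transform[OF x(2)] by simp
        also have "\<dots> \<le> ?P" using transform_mem[OF x(2,3,4)] x(5) by (intro W) auto
        finally show "?f1 x \<le> ?P" .
      qed
      show "?P \<le> Sup (?f1 ` ?S1)"
      proof (rule dense)
        fix r assume "ereal r < ?P"
        then obtain m lam where ml: "m \<in> finite_meas_tuples" "(\<Sum>i\<in>UNIV. m i \<bullet> ones) = 1"
           "(\<Sum>i\<in>UNIV. p i *\<^sub>R lam i) = 0" "ereal r \<le> val2 m lam" using St by blast
        obtain mu g where mg: "mu \<in> prob_tuples" "\<forall>j. 0 \<le> g $ j" "g \<bullet> ones = 1"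
          "(\<lambda>i. \<chi> j. g $ j * mu i $ j) = m" using transform_back[OF ml(1,2)] by blast
        have "(mu, lam, g) \<in> ?S1" using mg ml by blast
        then have "?f1 (mu, lam, g) \<le> Sup (?f1 ` ?S1)" by (rule SUP_upper)
        moreover have "?f1 (mu, lam, g) = val2 m lam"
          unfolding val2_def mg(4)[symmetric] using transform[OF mg(1), of A b C W T h Q p lam g v R] by simp
        ultimately show "ereal r \<le> Sup (?f1 ` ?S1)" using ml(4) by simp
      qed
    qed
  qed
qed

end
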